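(* Let $(A,\mu,\Delta,\alpha,\beta,\psi,\omega)$ be an infinitesimal BiHom-bialgebra (with $\mu(a\otimes b)=a\cdot b$). Define left and right actions of $A$ on $A\otimes A$ by $a\cdot(b\otimes c)=\omega(a)\cdot b\otimes\beta(c)$ and $(b\otimes c)\cdot a=\alpha(b)\otimes c\cdot\psi(a)$ for $a,b,c\in A$. Then $(A\otimes A,\alpha\otimes\alpha,\beta\otimes\beta)$ with these actions is an $A$-bimodule, and $\Delta$ is a derivation of $A$ with values in it, i.e. $\Delta(a\cdot b)=a\cdot\Delta(b)+\Delta(a)\cdot b$ for all $a,b\in A$.
   Context: Work over a field. A BiHom-associative algebra is a 4-tuple $(A,\mu,\alpha,\beta)$ with $\alpha,\beta$ commuting linear maps, multiplicative for $\mu$, and $\alpha(x)\cdot(y\cdot z)=(x\cdot y)\cdot\beta(z)$. A BiHom-coassociative coalgebra is $(C,\Delta,\psi,\omega)$ with $\psi\omega=\omega\psi$, $(\psi\otimes\psi)\Delta=\Delta\psi$, $(\omega\otimes\omega)\Delta=\Delta\omega$ and $(\Delta\otimes\psi)\Delta=(\omega\otimes\Delta)\Delta$. An infinitesimal BiHom-bialgebra is a 7-tuple $(A,\mu,\Delta,\alpha,\beta,\psi,\omega)$ with $(A,\mu,\alpha,\beta)$ BiHom-associative, $(A,\Delta,\psi,\omega)$ BiHom-coassociative, and for all $a,b$ (with $\Delta(a)=a_1\otimes a_2$): $\Delta(a\cdot b)=\omega(a)\cdot b_1\otimes\beta(b_2)+\alpha(a_1)\otimes a_2\cdot\psi(b)$;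 $\alpha\psi=\psi\alpha$, $\alpha\omega=\omega\alpha$, $\beta\psi=\psi\beta$, $\beta\omega=\omega\beta$; $(\alpha\otimes\alpha)\Delta=\Delta\alpha$, $(\beta\otimes\beta)\Delta=\Delta\beta$; $\psi,\omega$ multiplicative. For a BiHom-associative algebra $(A,\mu,\alpha,\beta)$ and $(M,\alpha_M,\beta_M)$ with commuting linear $\alpha_M,\beta_M$: $M$ is a left $A$-module via $a\otimes m\mapsto a\cdot m$ if $\alpha_M(a\cdot m)=\alpha(a)\cdot\alpha_M(m)$, $\beta_M(a\cdot m)=\beta(a)\cdot\beta_M(m)$, $\alpha(a)\cdot(a'\cdot m)=(a\cdot a')\cdot\beta_M(m)$; a right $A$-module via $m\otimes a\mapsto m\cdot a$ if $\alpha_M(m\cdot a)=\alpha_M(m)\cdot\alpha(a)$, $\beta_M(m\cdot a)=\beta_M(m)\cdot\beta(a)$, $\alpha_M(m)\cdot(a\cdot a')=(m\cdot a)\cdot\beta(a')$; an $A$-bimodule if both and $\alpha(a)\cdot(m\cdot a')=(a\cdot m)\cdot\beta(a')$. *)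

theory Defs
  imports Complex_Main
begin

text \<open>Vector spaces over a field 'k are given by a scalar multiplication
  (library locale vector_space); linear maps by the library predicate
  Vector_Spaces.linear.\<close>

definition bilin ::
  "('k::field \<Rightarrow> 'a::ab_group_add \<Rightarrow> 'a) \<Rightarrow> ('k \<Rightarrow> 'b::ab_group_add \<Rightarrow> 'b)
   \<Rightarrow> ('k \<Rightarrow> 'c::ab_group_add \<Rightarrow> 'c) \<Rightarrow> ('a \<Rightarrow> 'b \<Rightarrow> 'c) \<Rightarrow> bool" where
  "bilin s1 s2 s3 h \<longleftrightarrow>
     (\<forall>x. Vector_Spaces.linear s2 s3 (h x)) \<and> (\<forall>y. Vector_Spaces.linear s1 s3 (\<lambda>x. h x y))"

definition trilin ::
  "('k::field \<Rightarrow> 'a::ab_group_add \<Rightarrow> 'a) \<Rightarrow> ('k \<Rightarrow> 'c::ab_group_add \<Rightarrow> 'c)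
   \<Rightarrow> ('a \<Rightarrow> 'a \<Rightarrow> 'a \<Rightarrow> 'c) \<Rightarrow> bool" where
  "trilin s1 s3 h \<longleftrightarrow>
     (\<forall>x y. Vector_Spaces.linear s1 s3 (h x y)) \<and>
     (\<forall>x z. Vector_Spaces.linear s1 s3 (\<lambda>y. h x y z)) \<and>
     (\<forall>y z. Vector_Spaces.linear s1 s3 (\<lambda>x. h x y z))"

definition tensor_univ ::
  "('k::field \<Rightarrow> 'a::ab_group_add \<Rightarrow> 'a) \<Rightarrow> ('k \<Rightarrow> 't::ab_group_add \<Rightarrow> 't)
   \<Rightarrow> ('a \<Rightarrow> 'a \<Rightarrow> 't) \<Rightarrow> ('k \<Rightarrow> 'v::ab_group_add \<Rightarrow> 'v) \<Rightarrow> bool" where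
  "tensor_univ sa st tn sv \<longleftrightarrow>
     (\<forall>h. bilin sa sa sv h \<longrightarrow>
        (\<exists>!g. Vector_Spaces.linear st sv g \<and> (\<forall>x y. g (tn x y) = h x y)))"

definition tensor3_univ ::
  "('k::field \<Rightarrow> 'a::ab_group_add \<Rightarrow> 'a) \<Rightarrow> ('k \<Rightarrow> 'u::ab_group_add \<Rightarrow> 'u)
   \<Rightarrow> ('a \<Rightarrow> 'a \<Rightarrow> 'a \<Rightarrow> 'u) \<Rightarrow> ('k \<Rightarrow> 'v::ab_group_add \<Rightarrow> 'v) \<Rightarrow> bool" where
  "tensor3_univ sa su tn3 sv \<longleftrightarrow>
     (\<forall>h. trilin sa sv h \<longrightarrow>
        (\<exists>!g. Vector_Spaces.linear su sv g \<and> (\<forall>x y z. g (tn3 x y z) = h x y z)))"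

text \<open>The universal property for the scalar field itself already characterises
  the tensor product up to isomorphism; since HOL cannot quantify over types
  inside a formula, we additionally record it for the other target spaces used
  (A \<otimes> A itself and A \<otimes> A \<otimes> A), which every tensor product satisfies.\<close>

definition is_tensor2 ::
  "('k::field \<Rightarrow> 'a::ab_group_add \<Rightarrow> 'a) \<Rightarrow> ('k \<Rightarrow> 't::ab_group_add \<Rightarrow> 't)
   \<Rightarrow> ('a \<Rightarrow> 'a \<Rightarrow> 't) \<Rightarrow> ('k \<Rightarrow> 'u::ab_group_add \<Rightarrow> 'u) \<Rightarrow> bool" where
  "is_tensor2 sa st tn su \<longleftrightarrow>
     vector_space sa \<and> vector_space st \<and> bilin sa sa st tn \<and>
     tensor_univ sa st tn ((*) :: 'k \<Rightarrow> 'k \<Rightarrow> 'k) \<and> tensor_univ sa st tn st \<and>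
     tensor_univ sa st tn su"

definition is_tensor3 ::
  "('k::field \<Rightarrow> 'a::ab_group_add \<Rightarrow> 'a) \<Rightarrow> ('k \<Rightarrow> 'u::ab_group_add \<Rightarrow> 'u)
   \<Rightarrow> ('a \<Rightarrow> 'a \<Rightarrow> 'a \<Rightarrow> 'u) \<Rightarrow> bool" where
  "is_tensor3 sa su tn3 \<longleftrightarrow>
     vector_space sa \<and> vector_space su \<and> trilin sa su tn3 \<and>
     tensor3_univ sa su tn3 ((*) :: 'k \<Rightarrow> 'k \<Rightarrow> 'k) \<and> tensor3_univ sa su tn3 su"

definition ext2 ::
  "('k::field \<Rightarrow> 't::ab_group_add \<Rightarrow> 't) \<Rightarrow> ('k \<Rightarrow> 'v::ab_group_add \<Rightarrow> 'v)
   \<Rightarrow> ('a \<Rightarrow> 'a \<Rightarrow> 't) \<Rightarrow> ('a \<Rightarrow> 'a \<Rightarrow> 'v) \<Rightarrow> 't \<Rightarrow> 'v" where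
  "ext2 st sv tn h = (THE g. Vector_Spaces.linear st sv g \<and> (\<forall>x y. g (tn x y) = h x y))"

definition tmap ::
  "('k::field \<Rightarrow> 't::ab_group_add \<Rightarrow> 't) \<Rightarrow> ('a \<Rightarrow> 'a \<Rightarrow> 't)
   \<Rightarrow> ('a \<Rightarrow> 'a) \<Rightarrow> ('a \<Rightarrow> 'a) \<Rightarrow> 't \<Rightarrow> 't" where
  "tmap st tn f g = ext2 st st tn (\<lambda>x y. tn (f x) (g y))"

text \<open>w \<otimes> z and z \<otimes> w in A \<otimes> A \<otimes> A for w in A \<otimes> A and z in A
  (identifying (A\<otimes>A)\<otimes>A and A\<otimes>(A\<otimes>A) with A\<otimes>A\<otimes>A).\<close>

definition tens_r ::
  "('k::field \<Rightarrow> 't::ab_group_add \<Rightarrow> 't) \<Rightarrow> ('k \<Rightarrow> 'u::ab_group_add \<Rightarrow> 'u)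
   \<Rightarrow> ('a \<Rightarrow> 'a \<Rightarrow> 't) \<Rightarrow> ('a \<Rightarrow> 'a \<Rightarrow> 'a \<Rightarrow> 'u) \<Rightarrow> 't \<Rightarrow> 'a \<Rightarrow> 'u" where
  "tens_r st su tn tn3 w z = ext2 st su tn (\<lambda>x y. tn3 x y z) w"

definition tens_l ::
  "('k::field \<Rightarrow> 't::ab_group_add \<Rightarrow> 't) \<Rightarrow> ('k \<Rightarrow> 'u::ab_group_add \<Rightarrow> 'u)
   \<Rightarrow> ('a \<Rightarrow> 'a \<Rightarrow> 't) \<Rightarrow> ('a \<Rightarrow> 'a \<Rightarrow> 'a \<Rightarrow> 'u) \<Rightarrow> 'a \<Rightarrow> 't \<Rightarrow> 'u" where
  "tens_l st su tn tn3 z w = ext2 st su tn (\<lambda>x y. tn3 z x y) w"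

definition tmap_r ::
  "('k::field \<Rightarrow> 't::ab_group_add \<Rightarrow> 't) \<Rightarrow> ('k \<Rightarrow> 'u::ab_group_add \<Rightarrow> 'u)
   \<Rightarrow> ('a \<Rightarrow> 'a \<Rightarrow> 't) \<Rightarrow> ('a \<Rightarrow> 'a \<Rightarrow> 'a \<Rightarrow> 'u) \<Rightarrow> ('a \<Rightarrow> 't) \<Rightarrow> ('a \<Rightarrow> 'a) \<Rightarrow> 't \<Rightarrow> 'u" where
  "tmap_r st su tn tn3 f g = ext2 st su tn (\<lambda>x y. tens_r st su tn tn3 (f x) (g y))"

definition tmap_l ::
  "('k::field \<Rightarrow> 't::ab_group_add \<Rightarrow> 't) \<Rightarrow> ('k \<Rightarrow> 'u::ab_group_add \<Rightarrow> 'u)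
   \<Rightarrow> ('a \<Rightarrow> 'a \<Rightarrow> 't) \<Rightarrow> ('a \<Rightarrow> 'a \<Rightarrow> 'a \<Rightarrow> 'u) \<Rightarrow> ('a \<Rightarrow> 'a) \<Rightarrow> ('a \<Rightarrow> 't) \<Rightarrow> 't \<Rightarrow> 'u" where
  "tmap_l st su tn tn3 f g = ext2 st su tn (\<lambda>x y. tens_l st su tn tn3 (f x) (g y))"

definition bihom_assoc_alg ::
  "('k::field \<Rightarrow> 'a::ab_group_add \<Rightarrow> 'a) \<Rightarrow> ('a \<Rightarrow> 'a \<Rightarrow> 'a) \<Rightarrow> ('a \<Rightarrow> 'a) \<Rightarrow> ('a \<Rightarrow> 'a) \<Rightarrow> bool" where
  "bihom_assoc_alg sa mu alpha beta \<longleftrightarrow>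
     vector_space sa \<and> bilin sa sa sa mu \<and>
     Vector_Spaces.linear sa sa alpha \<and> Vector_Spaces.linear sa sa beta \<and>
     alpha \<circ> beta = beta \<circ> alpha \<and>
     (\<forall>x y. alpha (mu x y) = mu (alpha x) (alpha y)) \<and>
     (\<forall>x y. beta (mu x y) = mu (beta x) (beta y)) \<and>
     (\<forall>x y z. mu (alpha x) (mu y z) = mu (mu x y) (beta z))"

definition bihom_coassoc_coalg ::
  "('k::field \<Rightarrow> 'a::ab_group_add \<Rightarrow> 'a) \<Rightarrow> ('k \<Rightarrow> 't::ab_group_add \<Rightarrow> 't) \<Rightarrow> ('a \<Rightarrow> 'a \<Rightarrow> 't)
   \<Rightarrow> ('k \<Rightarrow> 'u::ab_group_add \<Rightarrow> 'u) \<Rightarrow> ('a \<Rightarrow> 'a \<Rightarrow> 'a \<Rightarrow> 'u)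
   \<Rightarrow> ('a \<Rightarrow> 't) \<Rightarrow> ('a \<Rightarrow> 'a) \<Rightarrow> ('a \<Rightarrow> 'a) \<Rightarrow> bool" where
  "bihom_coassoc_coalg sa st tn su tn3 Delta psi omega \<longleftrightarrow>
     vector_space sa \<and> Vector_Spaces.linear sa st Delta \<and>
     Vector_Spaces.linear sa sa psi \<and> Vector_Spaces.linear sa sa omega \<and>
     psi \<circ> omega = omega \<circ> psi \<and>
     (\<forall>x. tmap st tn psi psi (Delta x) = Delta (psi x)) \<and>
     (\<forall>x. tmap st tn omega omega (Delta x) = Delta (omega x)) \<and>
     (\<forall>x. tmap_r st su tn tn3 Delta psi (Delta x) = tmap_l st su tn tn3 omega Delta (Delta x))"

definition tens_lact ::
  "('k::field \<Rightarrow> 't::ab_group_add \<Rightarrow> 't) \<Rightarrow> ('a \<Rightarrow> 'a \<Rightarrow> 't) \<Rightarrow> ('a \<Rightarrow> 'a \<Rightarrow> 'a)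
   \<Rightarrow> ('a \<Rightarrow> 'a) \<Rightarrow> ('a \<Rightarrow> 'a) \<Rightarrow> 'a \<Rightarrow> 't \<Rightarrow> 't" where
  "tens_lact st tn mu beta omega a = tmap st tn (\<lambda>b. mu (omega a) b) beta"

definition tens_ract ::
  "('k::field \<Rightarrow> 't::ab_group_add \<Rightarrow> 't) \<Rightarrow> ('a \<Rightarrow> 'a \<Rightarrow> 't) \<Rightarrow> ('a \<Rightarrow> 'a \<Rightarrow> 'a)
   \<Rightarrow> ('a \<Rightarrow> 'a) \<Rightarrow> ('a \<Rightarrow> 'a) \<Rightarrow> 't \<Rightarrow> 'a \<Rightarrow> 't" where
  "tens_ract st tn mu alpha psi m a = tmap st tn alpha (\<lambda>c. mu c (psi a)) m"

definition inf_bihom_bialg ::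
  "('k::field \<Rightarrow> 'a::ab_group_add \<Rightarrow> 'a) \<Rightarrow> ('k \<Rightarrow> 't::ab_group_add \<Rightarrow> 't) \<Rightarrow> ('a \<Rightarrow> 'a \<Rightarrow> 't)
   \<Rightarrow> ('k \<Rightarrow> 'u::ab_group_add \<Rightarrow> 'u) \<Rightarrow> ('a \<Rightarrow> 'a \<Rightarrow> 'a \<Rightarrow> 'u)
   \<Rightarrow> ('a \<Rightarrow> 'a \<Rightarrow> 'a) \<Rightarrow> ('a \<Rightarrow> 't)
   \<Rightarrow> ('a \<Rightarrow> 'a) \<Rightarrow> ('a \<Rightarrow> 'a) \<Rightarrow> ('a \<Rightarrow> 'a) \<Rightarrow> ('a \<Rightarrow> 'a) \<Rightarrow> bool" where
  "inf_bihom_bialg sa st tn su tn3 mu Delta alpha beta psi omega \<longleftrightarrow>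
     bihom_assoc_alg sa mu alpha beta \<and>
     bihom_coassoc_coalg sa st tn su tn3 Delta psi omega \<and>
     (\<forall>a b. Delta (mu a b) =
        tmap st tn (\<lambda>x. mu (omega a) x) beta (Delta b) + tmap st tn alpha (\<lambda>y. mu y (psi b)) (Delta a)) \<and>
     alpha \<circ> psi = psi \<circ> alpha \<and> alpha \<circ> omega = omega \<circ> alpha \<and>
     beta \<circ> psi = psi \<circ> beta \<and> beta \<circ> omega = omega \<circ> beta \<and>
     (\<forall>x. tmap st tn alpha alpha (Delta x) = Delta (alpha x)) \<and>
     (\<forall>x. tmap st tn beta beta (Delta x) = Delta (beta x)) \<and>
     (\<forall>x y. psi (mu x y) = mu (psi x) (psi y)) \<and>
     (\<forall>x y. omega (mu x y) = mu (omega x) (omega y))"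

definition bihom_left_module ::
  "('k::field \<Rightarrow> 'a::ab_group_add \<Rightarrow> 'a) \<Rightarrow> ('a \<Rightarrow> 'a \<Rightarrow> 'a) \<Rightarrow> ('a \<Rightarrow> 'a) \<Rightarrow> ('a \<Rightarrow> 'a)
   \<Rightarrow> ('k \<Rightarrow> 'm::ab_group_add \<Rightarrow> 'm) \<Rightarrow> ('m \<Rightarrow> 'm) \<Rightarrow> ('m \<Rightarrow> 'm) \<Rightarrow> ('a \<Rightarrow> 'm \<Rightarrow> 'm) \<Rightarrow> bool" where
  "bihom_left_module sa mu alpha beta sm alphaM betaM act \<longleftrightarrow>
     bihom_assoc_alg sa mu alpha beta \<and> vector_space sm \<and>
     Vector_Spaces.linear sm sm alphaM \<and> Vector_Spaces.linear sm sm betaM \<and>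
     alphaM \<circ> betaM = betaM \<circ> alphaM \<and> bilin sa sm sm act \<and>
     (\<forall>a m. alphaM (act a m) = act (alpha a) (alphaM m)) \<and>
     (\<forall>a m. betaM (act a m) = act (beta a) (betaM m)) \<and>
     (\<forall>a a' m. act (alpha a) (act a' m) = act (mu a a') (betaM m))"

definition bihom_right_module ::
  "('k::field \<Rightarrow> 'a::ab_group_add \<Rightarrow> 'a) \<Rightarrow> ('a \<Rightarrow> 'a \<Rightarrow> 'a) \<Rightarrow> ('a \<Rightarrow> 'a) \<Rightarrow> ('a \<Rightarrow> 'a)
   \<Rightarrow> ('k \<Rightarrow> 'm::ab_group_add \<Rightarrow> 'm) \<Rightarrow> ('m \<Rightarrow> 'm) \<Rightarrow> ('m \<Rightarrow> 'm) \<Rightarrow> ('m \<Rightarrow> 'a \<Rightarrow> 'm) \<Rightarrow> bool" where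
  "bihom_right_module sa mu alpha beta sm alphaM betaM act \<longleftrightarrow>
     bihom_assoc_alg sa mu alpha beta \<and> vector_space sm \<and>
     Vector_Spaces.linear sm sm alphaM \<and> Vector_Spaces.linear sm sm betaM \<and>
     alphaM \<circ> betaM = betaM \<circ> alphaM \<and> bilin sm sa sm act \<and>
     (\<forall>m a. alphaM (act m a) = act (alphaM m) (alpha a)) \<and>
     (\<forall>m a. betaM (act m a) = act (betaM m) (beta a)) \<and>
     (\<forall>m a a'. act (alphaM m) (mu a a') = act (act m a) (beta a'))"

definition bihom_bimodule ::
  "('k::field \<Rightarrow> 'a::ab_group_add \<Rightarrow> 'a) \<Rightarrow> ('a \<Rightarrow> 'a \<Rightarrow> 'a) \<Rightarrow> ('a \<Rightarrow> 'a) \<Rightarrow> ('a \<Rightarrow> 'a)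
   \<Rightarrow> ('k \<Rightarrow> 'm::ab_group_add \<Rightarrow> 'm) \<Rightarrow> ('m \<Rightarrow> 'm) \<Rightarrow> ('m \<Rightarrow> 'm)
   \<Rightarrow> ('a \<Rightarrow> 'm \<Rightarrow> 'm) \<Rightarrow> ('m \<Rightarrow> 'a \<Rightarrow> 'm) \<Rightarrow> bool" where
  "bihom_bimodule sa mu alpha beta sm alphaM betaM lact ract \<longleftrightarrow>
     bihom_left_module sa mu alpha beta sm alphaM betaM lact \<and>
     bihom_right_module sa mu alpha beta sm alphaM betaM ract \<and>
     (\<forall>a m a'. lact (alpha a) (ract m a') = ract (lact a m) (beta a'))"

end

theory Submission
  imports Defs
begin

lemma ext2_char:
  assumes "tensor_univ sa st tn sv" "bilin sa sa sv h"
  shows "Vector_Spaces.linear st sv (ext2 st sv tn h) \<and> (\<forall>x y. ext2 st sv tn h (tn x y) = h x y)"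
proof -
  have "\<exists>!g. Vector_Spaces.linear st sv g \<and> (\<forall>x y. g (tn x y) = h x y)"
    using assms unfolding tensor_univ_def by blast
  from theI'[OF this] show ?thesis unfolding ext2_def .
qed

lemma bilin_comp:
  assumes "bilin sa sa st tn" "Vector_Spaces.linear st sv G"
  shows "bilin sa sa sv (\<lambda>x y. G (tn x y))"
  using assms unfolding bilin_def
  by (auto intro: Vector_Spaces.linear_compose[where g=G, unfolded o_def])

lemma tens_uniq:
  assumes "tensor_univ sa st tn sv" "bilin sa sa st tn"
    "Vector_Spaces.linear st sv GA" "Vector_Spaces.linear st sv GB"
    "\<And>x y. GA (tn x y) = GB (tn x y)"
  shows "GA m = GB m"
proof -
  have b: "bilin sa sa sv (\<lambda>x y. GA (tn x y))" by (rule bilin_comp[OF assms(2,3)])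
  have "\<exists>!g. Vector_Spaces.linear st sv g \<and> (\<forall>x y. g (tn x y) = GA (tn x y))"
    using assms(1) b unfolding tensor_univ_def by blast
  hence "GA = GB" using assms(3,4,5) by metis
  thus ?thesis by simp
qed

lemma tmap_char:
  assumes "tensor_univ sa st tn st" "bilin sa sa st tn"
    "Vector_Spaces.linear sa sa f" "Vector_Spaces.linear sa sa g"
  shows "Vector_Spaces.linear st st (tmap st tn f g) \<and> (\<forall>x y. tmap st tn f g (tn x y) = tn (f x) (g y))"
proof -
  have "bilin sa sa st (\<lambda>x y. tn (f x) (g y))"
    using assms(2-4) unfolding bilin_def
    using Vector_Spaces.linear_compose[OF assms(4), unfolded o_def]
          Vector_Spaces.linear_compose[OF assms(3), unfolded o_def] by blast
  from ext2_char[OF assms(1) this] show ?thesis unfolding tmap_def .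
qed

lemma linpar:
  assumes "tensor_univ sa st tn st" "bilin sa sa st tn" "vector_space sb"
    "\<And>a. Vector_Spaces.linear st st (F a)"
    "\<And>x y. Vector_Spaces.linear sb st (\<lambda>a. F a (tn x y))"
  shows "Vector_Spaces.linear sb st (\<lambda>a. F a m)"
proof -
  have vst: "vector_space st" using assms(4)[of undefined] by (simp add: Vector_Spaces.linear_iff)
  have add: "F (a + b) m = F a m + F b m" for a b m
  proof (rule tens_uniq[where GB = "\<lambda>m. F a m + F b m", OF assms(1,2)])
    show "Vector_Spaces.linear st st (F (a + b))" by fact
    show "Vector_Spaces.linear st st (\<lambda>m. F a m + F b m)"
      using assms(4)[of a] assms(4)[of b] unfolding Vector_Spaces.linear_iff
      by (auto simp: vector_space.vector_space_assms(1)[OF vst] ac_simps)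
    show "F (a + b) (tn x y) = F a (tn x y) + F b (tn x y)" for x y
      using assms(5)[of x y] unfolding Vector_Spaces.linear_iff by blast
  qed
  have sc: "F (sb c a) m = st c (F a m)" for a c m
  proof (rule tens_uniq[where GB = "\<lambda>m. st c (F a m)", OF assms(1,2)])
    show "Vector_Spaces.linear st st (F (sb c a))" by fact
    show "Vector_Spaces.linear st st (\<lambda>m. st c (F a m))"
      using assms(4)[of a] unfolding Vector_Spaces.linear_iff
      by (auto simp: vector_space.vector_space_assms(1,3)[OF vst] mult.commute)
    show "F (sb c a) (tn x y) = st c (F a (tn x y))" for x y
      using assms(5)[of x y] unfolding Vector_Spaces.linear_iff by blast
  qed
  show ?thesis unfolding Vector_Spaces.linear_iff using assms(3) vst add sc by blast
qed

theorem lemma4p2: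
  fixes sa :: "'k::field \<Rightarrow> 'a::ab_group_add \<Rightarrow> 'a"
    and st :: "'k \<Rightarrow> 't::ab_group_add \<Rightarrow> 't" and tn :: "'a \<Rightarrow> 'a \<Rightarrow> 't"
    and su :: "'k \<Rightarrow> 'u::ab_group_add \<Rightarrow> 'u" and tn3 :: "'a \<Rightarrow> 'a \<Rightarrow> 'a \<Rightarrow> 'u"
    and mu :: "'a \<Rightarrow> 'a \<Rightarrow> 'a" and Delta :: "'a \<Rightarrow> 't"
    and alpha beta psi omega :: "'a \<Rightarrow> 'a"
  assumes "is_tensor2 sa st tn su"
    and "is_tensor3 sa su tn3"
    and "inf_bihom_bialg sa st tn su tn3 mu Delta alpha beta psi omega"
  shows "bihom_bimodule sa mu alpha beta st (tmap st tn alpha alpha) (tmap st tn beta beta)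
           (tens_lact st tn mu beta omega) (tens_ract st tn mu alpha psi)
         \<and> (\<forall>a b. Delta (mu a b) =
              tens_lact st tn mu beta omega a (Delta b) + tens_ract st tn mu alpha psi (Delta a) b)"
proof -
  from assms(1) have vsa: "vector_space sa" and vst: "vector_space st" and btn: "bilin sa sa st tn"
    and tu: "tensor_univ sa st tn st" unfolding is_tensor2_def by auto
  from assms(3) have ba: "bihom_assoc_alg sa mu alpha beta"
    and co: "bihom_coassoc_coalg sa st tn su tn3 Delta psi omega"
    and der: "\<forall>a b. Delta (mu a b) =
        tmap st tn (\<lambda>x. mu (omega a) x) beta (Delta b) + tmap st tn alpha (\<lambda>y. mu y (psi b)) (Delta a)"
    and c1: "alpha \<circ> psi = psi \<circ> alpha" and c2: "alpha \<circ> omega = omega \<circ> alpha"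
    and c3: "beta \<circ> psi = psi \<circ> beta" and c4: "beta \<circ> omega = omega \<circ> beta"
    and mpsi: "\<And>x y. psi (mu x y) = mu (psi x) (psi y)"
    and momega: "\<And>x y. omega (mu x y) = mu (omega x) (omega y)"
    unfolding inf_bihom_bialg_def by auto
  from ba have bmu: "bilin sa sa sa mu" and la: "Vector_Spaces.linear sa sa alpha"
    and lb: "Vector_Spaces.linear sa sa beta" and c0: "alpha \<circ> beta = beta \<circ> alpha"
    and malpha: "\<And>x y. alpha (mu x y) = mu (alpha x) (alpha y)"
    and mbeta: "\<And>x y. beta (mu x y) = mu (beta x) (beta y)"
    and assoc: "\<And>x y z. mu (alpha x) (mu y z) = mu (mu x y) (beta z)"
    unfolding bihom_assoc_alg_def by auto
  from co have lpsi: "Vector_Spaces.linear sa sa psi" and lom: "Vector_Spaces.linear sa sa omega"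
    unfolding bihom_coassoc_coalg_def by auto
  have c0': "\<And>x. alpha (beta x) = beta (alpha x)" using c0 by (metis comp_apply)
  have c1': "\<And>x. alpha (psi x) = psi (alpha x)" using c1 by (metis comp_apply)
  have c2': "\<And>x. alpha (omega x) = omega (alpha x)" using c2 by (metis comp_apply)
  have c3': "\<And>x. beta (psi x) = psi (beta x)" using c3 by (metis comp_apply)
  have c4': "\<And>x. beta (omega x) = omega (beta x)" using c4 by (metis comp_apply)
  have lml: "\<And>a. Vector_Spaces.linear sa sa (mu a)" and lmr: "\<And>b. Vector_Spaces.linear sa sa (\<lambda>a. mu a b)"
    using bmu unfolding bilin_def by auto
  have lml2: "Vector_Spaces.linear sa sa (\<lambda>b. mu (omega a) b)" for a using lml by simp
  have lmr2: "Vector_Spaces.linear sa sa (\<lambda>c. mu c (psi a))" for a using lmr by simp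
  note T = tmap_char[OF tu btn]
  define L where "L = tens_lact st tn mu beta omega"
  define R where "R = tens_ract st tn mu alpha psi"
  define AM where "AM = tmap st tn alpha alpha"
  define BM where "BM = tmap st tn beta beta"
  have Lc: "Vector_Spaces.linear st st (L a) \<and> (\<forall>x y. L a (tn x y) = tn (mu (omega a) x) (beta y))" for a
    unfolding L_def tens_lact_def using T[OF lml2 lb] .
  have Rc: "Vector_Spaces.linear st st (\<lambda>m. R m a) \<and> (\<forall>x y. R (tn x y) a = tn (alpha x) (mu y (psi a)))" for a
    unfolding R_def tens_ract_def using T[OF la lmr2] .
  have AMc: "Vector_Spaces.linear st st AM \<and> (\<forall>x y. AM (tn x y) = tn (alpha x) (alpha y))"
    unfolding AM_def using T[OF la la] .
  have BMc: "Vector_Spaces.linear st st BM \<and> (\<forall>x y. BM (tn x y) = tn (beta x) (beta y))"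
    unfolding BM_def using T[OF lb lb] .
  have linL: "Vector_Spaces.linear st st (L a)" for a using Lc by blast
  have linR: "Vector_Spaces.linear st st (\<lambda>m. R m a)" for a using Rc by blast
  have linAM: "Vector_Spaces.linear st st AM" using AMc by blast
  have linBM: "Vector_Spaces.linear st st BM" using BMc by blast
  have comp2: "Vector_Spaces.linear st st (\<lambda>m. F (G m))"
    if "Vector_Spaces.linear st st F" "Vector_Spaces.linear st st G" for F G
    using Vector_Spaces.linear_compose[OF that(2,1)] by (simp add: o_def)
  note lins = comp2[OF linL linAM] comp2[OF linL linBM] comp2[OF linAM linL] comp2[OF linBM linL]
    comp2[OF linL linL] comp2[OF linAM linBM] comp2[OF linBM linAM]
    comp2[OF linR linAM] comp2[OF linR linBM] comp2[OF linAM linR] comp2[OF linBM linR]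
    comp2[OF linR linR] comp2[OF linL linR] comp2[OF linR linL]
  note comp = Vector_Spaces.linear_compose[unfolded o_def]
  have tl1: "Vector_Spaces.linear sa st (\<lambda>z. tn z y)" for y using btn unfolding bilin_def by auto
  have tl2: "Vector_Spaces.linear sa st (tn x)" for x using btn unfolding bilin_def by auto
  have Llin: "Vector_Spaces.linear sa st (\<lambda>a. L a m)" for m
  proof (rule linpar[OF tu btn vsa])
    show "Vector_Spaces.linear st st (L a)" for a using Lc by blast
    show "Vector_Spaces.linear sa st (\<lambda>a. L a (tn x y))" for x y
      using Lc comp[OF comp[OF lom lmr[of x]] tl1[of "beta y"]] by simp
  qed
  have Rlin: "Vector_Spaces.linear sa st (R m)" for m
  proof (rule linpar[OF tu btn vsa, where F = "\<lambda>a m. R m a"])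
    show "Vector_Spaces.linear st st (\<lambda>m. R m a)" for a using Rc by blast
    show "Vector_Spaces.linear sa st (\<lambda>a. R (tn x y) a)" for x y
      using Rc comp[OF comp[OF lpsi lml[of y]] tl2[of "alpha x"]] by simp
  qed
  have left: "bihom_left_module sa mu alpha beta st AM BM L"
    unfolding bihom_left_module_def
  proof (intro conjI allI)
    show "bihom_assoc_alg sa mu alpha beta" by fact
    show "vector_space st" by fact
    show "Vector_Spaces.linear st st AM" using AMc by blast
    show "Vector_Spaces.linear st st BM" using BMc by blast
    show "AM \<circ> BM = BM \<circ> AM"
      by (rule ext, unfold o_def, rule tens_uniq[where GA="\<lambda>m. AM (BM m)" and GB="\<lambda>m. BM (AM m)", OF tu btn]) (use AMc BMc lins in \<open>auto simp: c0'\<close>)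
    show "bilin sa st st L" unfolding bilin_def using Lc Llin by blast
    show "AM (L a m) = L (alpha a) (AM m)" for a m
      by (rule tens_uniq[where GA="\<lambda>m. AM (L a m)" and GB="\<lambda>m. L (alpha a) (AM m)", OF tu btn]) (use AMc Lc lins in \<open>auto simp: malpha c0' c2'\<close>)
    show "BM (L a m) = L (beta a) (BM m)" for a m
      by (rule tens_uniq[where GA="\<lambda>m. BM (L a m)" and GB="\<lambda>m. L (beta a) (BM m)", OF tu btn]) (use BMc Lc lins in \<open>auto simp: mbeta c4'\<close>)
    show "L (alpha a) (L a' m) = L (mu a a') (BM m)" for a a' m
      by (rule tens_uniq[where GA="\<lambda>m. L (alpha a) (L a' m)" and GB="\<lambda>m. L (mu a a') (BM m)", OF tu btn]) (use BMc Lc lins in \<open>auto simp: momega assoc c2'[symmetric]\<close>)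
  qed
  have right: "bihom_right_module sa mu alpha beta st AM BM R"
    unfolding bihom_right_module_def
  proof (intro conjI allI)
    show "bihom_assoc_alg sa mu alpha beta" by fact
    show "vector_space st" by fact
    show "Vector_Spaces.linear st st AM" using AMc by blast
    show "Vector_Spaces.linear st st BM" using BMc by blast
    show "AM \<circ> BM = BM \<circ> AM"
      by (rule ext, unfold o_def, rule tens_uniq[where GA="\<lambda>m. AM (BM m)" and GB="\<lambda>m. BM (AM m)", OF tu btn]) (use AMc BMc lins in \<open>auto simp: c0'\<close>)
    show "bilin st sa st R" unfolding bilin_def using Rc Rlin by blast
    show "AM (R m a) = R (AM m) (alpha a)" for a m
      by (rule tens_uniq[where GA = "\<lambda>m. AM (R m a)" and GB = "\<lambda>m. R (AM m) (alpha a)", OF tu btn])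
         (use AMc Rc lins in \<open>auto simp: malpha c1'\<close>)
    show "BM (R m a) = R (BM m) (beta a)" for a m
      by (rule tens_uniq[where GA = "\<lambda>m. BM (R m a)" and GB = "\<lambda>m. R (BM m) (beta a)", OF tu btn])
         (use BMc Rc lins in \<open>auto simp: mbeta c0' c3'\<close>)
    show "R (AM m) (mu a a') = R (R m a) (beta a')" for a a' m
      by (rule tens_uniq[where GA = "\<lambda>m. R (AM m) (mu a a')" and GB = "\<lambda>m. R (R m a) (beta a')", OF tu btn])
         (use AMc Rc lins in \<open>auto simp: mpsi assoc c3'[symmetric]\<close>)
  qed
  have compat: "L (alpha a) (R m a') = R (L a m) (beta a')" for a a' m
    by (rule tens_uniq[where GA = "\<lambda>m. L (alpha a) (R m a')" and GB = "\<lambda>m. R (L a m) (beta a')", OF tu btn])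
       (use Lc Rc lins in \<open>auto simp: mbeta malpha c2' c3'\<close>)
  show ?thesis
    unfolding bihom_bimodule_def
    using left right compat der
    unfolding L_def R_def AM_def BM_def tens_lact_def tens_ract_def by blast
qed

end
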